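(* Assume (A) and (N) hold and $\omega_A<0$. For $t\ge0$, $\omega\in\Omega$ and $\xi\in H_0$ define $$\phi^t_\omega(\xi):=T_0(t)\xi-S_A'(t)Y_\omega(0)+Y_{\theta_t\omega}(0).$$ Then $\phi:\mathbb{R}^+\times\Omega\times H_0\to H_0$ is a random dynamical system over $(\Omega,\mathcal{F},\mathbb{P},(\theta_t))$; in particular $\phi^{t+s}_\omega(\xi)=\phi^s_{\theta_t\omega}\circ\phi^t_\omega(\xi)$ for all $\xi\in H_0$, $t,s\ge0$ and $\omega$.
   Context: Let $H$ be a separable Hilbert space and $A:D(A)\subset H\to H$ a linear operator with $H_0:=\overline{D(A)}\neq H$. The part of $A$ in $H_0$ is $A_0y:=Ay$ on $D(A_0):=\{y\in D(A):Ay\in H_0\}$. Assumption (A): (a) $A_0$ is sectorial on $H_0$, i.e. there are $\bar\omega\in\mathbb{R}$, $\vartheta\in(\pi/2,\pi)$, $\bar M>0$ with $\rho(A_0)\supset S_\vartheta:=\{z\in\mathbb{C}\setminus\{\bar\omega\}:|\arg(z-\bar\omega)|\le\vartheta\}$ and $\|(\lambda-A_0)^{-1}\|\le\bar M/|\lambda-\bar\omega|$ for $\lambda\in S_\vartheta$; (b) there exist $\omega_A\in\mathbb{R}$ and $p^*\in[1,\infty)$ with $(\omega_A,\infty)\subset\rho(A)$ and $\limsup_{\lambda\to+\infty}\lambda^{1/p^*}\|(\lambda I-A)^{-1}\|_{\mathcal{L}(H)}<\infty$. Under (A), $A_0$ generates an analytic $C_0$-semigroup $(T_0(t))_{t\ge0}$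 on $H_0$ and $A$ generates the integrated semigroup $S_A(t)=(\nu I-A_0)\int_0^tT_0(s)\,\mathrm{d}s\,(\nu I-A)^{-1}$ ($\nu>\omega_A$), differentiable in $t>0$, with $S_A'(t)x=T_0(t)x$ for $x\in H_0$. Assumption (N): $(\Omega,\mathcal{F},\mathbb{P},(\theta_t)_{t\in\mathbb{R}})$ is an ergodic metric dynamical system (each $\theta_t$ measurable and $\mathbb{P}$-preserving, $(t,\omega)\mapsto\theta_t\omega$ jointly measurable, $\theta_0=\mathrm{id}$, $\theta_{t+s}=\theta_t\circ\theta_s$, invariant sets have probability $0$ or $1$), and $W$ is a two-sided $Q$-Wiener process on $H$ ($Q$ trace class) with $W_t(\theta_s\omega)=W_{t+s}(\omega)-W_s(\omega)$. For $\omega_A<0$, $Y_\omega(t):=\int_{-\infty}^tS_A'(t-\tau)\,\mathrm{d}W(\tau)$ is an $H_0$-valued stationary process: $Y_{\theta_t\omega}(s)=Y_\omega(t+s)$ on a set of full measure. A random dynamical system (cocycle) on $H_0$ is a $(\mathcal{B}(\mathbb{R}^+)\otimes\mathcal{F}\otimes\mathcal{B}(H_0),\mathcal{B}(H_0))$-measurable map $\phi$ such that on a measurable set of full measure $\phi^0_\omega=\mathrm{id}$ and $\phi^{t+s}_\omega=\phi^s_{\theta_t\omega}\circ\phi^t_\omega$ for all $t,s\ge0$. *)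

theory Defs
  imports "HOL-Analysis.Analysis" "HOL-Probability.Probability"
begin

text \<open>Linear operator A with domain DA on a (real, separable) Hilbert space.
  H0 = closure DA; the part A0 of A in H0 has domain part_dom.\<close>

definition lin_op :: "'h::real_vector set \<Rightarrow> ('h \<Rightarrow> 'h) \<Rightarrow> bool" where
  "lin_op D A \<longleftrightarrow> subspace D \<and>
     (\<forall>x\<in>D. \<forall>y\<in>D. A (x + y) = A x + A y) \<and> (\<forall>c. \<forall>x\<in>D. A (c *\<^sub>R x) = c *\<^sub>R A x)"

definition part_dom :: "'h::real_normed_vector set \<Rightarrow> ('h \<Rightarrow> 'h) \<Rightarrow> 'h set" where
  "part_dom D A = {y \<in> D. A y \<in> closure D}"

definition in_real_resolvent :: "'h::real_normed_vector set \<Rightarrow> 'h set \<Rightarrow> ('h \<Rightarrow> 'h) \<Rightarrow> real \<Rightarrow> bool" where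
  "in_real_resolvent X D A lam \<longleftrightarrow>
     (\<forall>x\<in>X. \<exists>!y. y \<in> D \<and> lam *\<^sub>R y - A y = x) \<and>
     (\<exists>C. \<forall>y\<in>D. norm y \<le> C * norm (lam *\<^sub>R y - A y))"

definition resolv :: "'h::real_vector set \<Rightarrow> ('h \<Rightarrow> 'h) \<Rightarrow> real \<Rightarrow> 'h \<Rightarrow> 'h" where
  "resolv D A lam x = (THE y. y \<in> D \<and> lam *\<^sub>R y - A y = x)"

text \<open>Complex resolvent on the complexification X + iX of a real space:
  for lam = a + ib, (lam - A)(x + iy) = (a x - b y - A x) + i (b x + a y - A y).
  lam in resolvent set with resolvent norm bound K.\<close>
definition cplx_res_op :: "('h::real_vector \<Rightarrow> 'h) \<Rightarrow> complex \<Rightarrow> 'h \<times> 'h \<Rightarrow> 'h \<times> 'h" where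
  "cplx_res_op A lam p = (Re lam *\<^sub>R fst p - Im lam *\<^sub>R snd p - A (fst p),
                          Im lam *\<^sub>R fst p + Re lam *\<^sub>R snd p - A (snd p))"

definition cplx_norm :: "'h::real_normed_vector \<times> 'h \<Rightarrow> real" where
  "cplx_norm p = sqrt ((norm (fst p))\<^sup>2 + (norm (snd p))\<^sup>2)"

definition cplx_resolvent_bound ::
  "'h::real_normed_vector set \<Rightarrow> 'h set \<Rightarrow> ('h \<Rightarrow> 'h) \<Rightarrow> complex \<Rightarrow> real \<Rightarrow> bool" where
  "cplx_resolvent_bound X D A lam K \<longleftrightarrow>
     (\<forall>q\<in>X \<times> X. \<exists>!p. p \<in> D \<times> D \<and> cplx_res_op A lam p = q) \<and>
     (\<forall>p\<in>D \<times> D. cplx_norm p \<le> K * cplx_norm (cplx_res_op A lam p))"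

definition sector :: "real \<Rightarrow> real \<Rightarrow> complex set" where
  "sector w th = {z. z \<noteq> complex_of_real w \<and> \<bar>Arg (z - complex_of_real w)\<bar> \<le> th}"

definition sectorial :: "'h::real_normed_vector set \<Rightarrow> 'h set \<Rightarrow> ('h \<Rightarrow> 'h) \<Rightarrow> bool" where
  "sectorial X D A \<longleftrightarrow> (\<exists>w th M. pi/2 < th \<and> th < pi \<and> M > 0 \<and>
      (\<forall>lam\<in>sector w th. cplx_resolvent_bound X D A lam (M / cmod (lam - complex_of_real w))))"

definition assumption_A :: "'h::real_normed_vector set \<Rightarrow> ('h \<Rightarrow> 'h) \<Rightarrow> real \<Rightarrow> bool" where
  "assumption_A D A omegaA \<longleftrightarrow>
     sectorial (closure D) (part_dom D A) A \<and>
     (\<forall>lam>omegaA. in_real_resolvent UNIV D A lam) \<and>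
     (\<exists>p\<ge>1. \<exists>C lam0. \<forall>lam\<ge>lam0. \<forall>x.
         lam powr (1 / p) * norm (resolv D A lam x) \<le> C * norm x)"

definition C0_semigroup_generated ::
  "'h::real_normed_vector set \<Rightarrow> 'h set \<Rightarrow> ('h \<Rightarrow> 'h) \<Rightarrow> (real \<Rightarrow> 'h \<Rightarrow> 'h) \<Rightarrow> bool" where
  "C0_semigroup_generated X D0 A0 T \<longleftrightarrow>
     (\<forall>t\<ge>0. T t ` X \<subseteq> X \<and>
        (\<forall>x\<in>X. \<forall>y\<in>X. T t (x + y) = T t x + T t y) \<and>
        (\<forall>c. \<forall>x\<in>X. T t (c *\<^sub>R x) = c *\<^sub>R T t x) \<and>
        (\<exists>C. \<forall>x\<in>X. norm (T t x) \<le> C * norm x)) \<and>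
     (\<forall>x\<in>X. T 0 x = x) \<and>
     (\<forall>t\<ge>0. \<forall>s\<ge>0. \<forall>x\<in>X. T (t + s) x = T t (T s x)) \<and>
     (\<forall>x\<in>X. continuous_on {0..} (\<lambda>t. T t x)) \<and>
     (\<forall>x. x \<in> D0 \<longleftrightarrow> x \<in> X \<and> (\<exists>l. ((\<lambda>h. (1 / h) *\<^sub>R (T h x - x)) \<longlongrightarrow> l) (at_right 0))) \<and>
     (\<forall>x\<in>D0. ((\<lambda>h. (1 / h) *\<^sub>R (T h x - x)) \<longlongrightarrow> A0 x) (at_right 0))"

definition integrated_sg ::
  "'h::real_normed_vector set \<Rightarrow> ('h \<Rightarrow> 'h) \<Rightarrow> (real \<Rightarrow> 'h \<Rightarrow> 'h) \<Rightarrow> real \<Rightarrow> real \<Rightarrow> 'h \<Rightarrow> 'h" where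
  "integrated_sg D A T nu t x =
     (let z = integral {0..t} (\<lambda>s. T s (resolv D A nu x)) in nu *\<^sub>R z - A z)"

definition integrated_sg_deriv ::
  "'h::real_normed_vector set \<Rightarrow> ('h \<Rightarrow> 'h) \<Rightarrow> (real \<Rightarrow> 'h \<Rightarrow> 'h) \<Rightarrow> real \<Rightarrow> real \<Rightarrow> 'h \<Rightarrow> 'h" where
  "integrated_sg_deriv D A T nu t x =
     vector_derivative (\<lambda>\<tau>. integrated_sg D A T nu \<tau> x) (at t within {0..})"

definition ergodic_mds :: "'w measure \<Rightarrow> (real \<Rightarrow> 'w \<Rightarrow> 'w) \<Rightarrow> bool" where
  "ergodic_mds M \<theta> \<longleftrightarrow> prob_space M \<and>
     (\<forall>t. \<theta> t \<in> M \<rightarrow>\<^sub>M M \<and> distr M M (\<theta> t) = M) \<and>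
     (\<lambda>(t, w). \<theta> t w) \<in> borel \<Otimes>\<^sub>M M \<rightarrow>\<^sub>M M \<and>
     (\<forall>w\<in>space M. \<theta> 0 w = w) \<and>
     (\<forall>t s. \<forall>w\<in>space M. \<theta> (t + s) w = \<theta> t (\<theta> s w)) \<and>
     (\<forall>B\<in>sets M. (\<forall>t. \<theta> t -` B \<inter> space M = B) \<longrightarrow>
         measure M B = 0 \<or> measure M B = 1)"

definition rds :: "'w measure \<Rightarrow> (real \<Rightarrow> 'w \<Rightarrow> 'w) \<Rightarrow> 'h::topological_space set
                    \<Rightarrow> (real \<Rightarrow> 'w \<Rightarrow> 'h \<Rightarrow> 'h) \<Rightarrow> bool" where
  "rds M \<theta> X \<phi> \<longleftrightarrow>
     (\<lambda>(t, w, x). \<phi> t w x) \<in> restrict_space borel {0..} \<Otimes>\<^sub>M (M \<Otimes>\<^sub>M restrict_space borel X)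
        \<rightarrow>\<^sub>M restrict_space borel X \<and>
     (\<exists>\<Omega>'\<in>sets M. emeasure M \<Omega>' = emeasure M (space M) \<and>
        (\<forall>w\<in>\<Omega>'. (\<forall>x\<in>X. \<phi> 0 w x = x) \<and>
           (\<forall>t\<ge>0. \<forall>s\<ge>0. \<forall>x\<in>X. \<phi> (t + s) w x = \<phi> s (\<theta> t w) (\<phi> t w x))))"

end

theory Submission
  imports Defs
begin

lemma rd_mono:
  fixes \<phi> :: "real \<Rightarrow> real"
  assumes ab: "a \<le> b" and cont: "continuous_on {a..b} \<phi>"
    and rd: "\<And>\<tau> e. \<tau> \<in> {a..<b} \<Longrightarrow> e > 0 \<Longrightarrow>
       \<exists>d>0. \<forall>h. 0 < h \<longrightarrow> h < d \<longrightarrow> \<tau> + h \<le> b \<longrightarrow> \<phi> (\<tau>+h) - \<phi> \<tau> \<le> e*h"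
  shows "\<phi> b \<le> \<phi> a"
proof -
  have key: "\<phi> b - \<phi> a \<le> e * (b - a)" if e: "e > 0" for e
  proof -
    define S where "S = {x\<in>{a..b}. \<phi> x \<le> \<phi> a + e * (x - a)}"
    have clS: "closed S" unfolding S_def
      by (rule continuous_on_closed_Collect_le[OF cont]) (auto intro!: continuous_intros)
    have aS: "a \<in> S" using ab by (simp add: S_def)
    have bdd: "bdd_above S" unfolding S_def by (rule bdd_aboveI[of _ b]) auto
    define c where "c = Sup S"
    have cS: "c \<in> S" unfolding c_def using closed_contains_Sup[OF _ bdd clS] aS by blast
    have cb: "c \<le> b" using cS by (simp add: S_def)
    have "c = b"
    proof (rule ccontr)
      assume "c \<noteq> b"
      then have cb': "c < b" using cb by simp
      have ca: "a \<le> c" using cS by (simp add: S_def)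
      obtain d where d: "d > 0" and dh: "\<forall>h. 0 < h \<longrightarrow> h < d \<longrightarrow> c + h \<le> b \<longrightarrow> \<phi> (c+h) - \<phi> c \<le> e*h"
        using rd[of c e] cb' ca e by auto
      define h where "h = min (d/2) (b - c)"
      have h: "0 < h" "h < d" "c + h \<le> b" using d cb' by (auto simp: h_def)
      have "\<phi> (c+h) \<le> \<phi> c + e*h" using dh h by auto
      also have "\<dots> \<le> \<phi> a + e*(c - a) + e*h" using cS by (simp add: S_def)
      finally have "c + h \<in> S" using h ca by (simp add: S_def algebra_simps)
      then have "c + h \<le> c" unfolding c_def using bdd by (rule cSup_upper)
      then show False using h by simp
    qed
    then show ?thesis using cS by (simp add: S_def)
  qed
  show ?thesis
  proof (rule ccontr)
    assume "\<not> ?thesis"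
    then have pos: "\<phi> b - \<phi> a > 0" by simp
    define e where "e = (\<phi> b - \<phi> a) / (2 * (b - a + 1))"
    have e: "e > 0" using pos ab by (simp add: e_def)
    have "e * (b - a) < \<phi> b - \<phi> a"
    proof -
      have "e * (b - a) \<le> e * (2 * (b - a + 1)) / 2" using e ab
        by (simp add: mult_left_mono)
      also have "\<dots> = (\<phi> b - \<phi> a) / 2" using ab by (simp add: e_def)
      also have "\<dots> < \<phi> b - \<phi> a" using pos by simp
      finally show ?thesis .
    qed
    with key[OF e] show False by simp
  qed
qed

definition rder :: "(real \<Rightarrow> 'a::real_normed_vector) \<Rightarrow> 'a \<Rightarrow> real \<Rightarrow> real \<Rightarrow> bool" where
  "rder g g' \<tau> b \<longleftrightarrow> (\<forall>e>0. \<exists>d>0. \<forall>h. 0 < h \<longrightarrow> h < d \<longrightarrow> \<tau> + h \<le> b \<longrightarrow>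
      norm (g (\<tau>+h) - g \<tau> - h *\<^sub>R g') \<le> e*h)"

lemma rder_zero_const:
  fixes g :: "real \<Rightarrow> 'a::real_normed_vector"
  assumes ab: "a \<le> b" and cont: "continuous_on {a..b} g"
    and r: "\<And>\<tau>. \<tau> \<in> {a..<b} \<Longrightarrow> rder g 0 \<tau> b"
  shows "g b = g a"
proof -
  have "norm (g b - g a) \<le> norm (g a - g a)"
  proof (rule rd_mono[OF ab, where \<phi> = "\<lambda>x. norm (g x - g a)"])
    show "continuous_on {a..b} (\<lambda>x. norm (g x - g a))"
      by (intro continuous_intros cont)
    fix \<tau> e :: real assume t: "\<tau> \<in> {a..<b}" and e: "e > 0"
    obtain d where d: "d > 0" and dh: "\<forall>h. 0 < h \<longrightarrow> h < d \<longrightarrow> \<tau> + h \<le> b \<longrightarrow>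
      norm (g (\<tau>+h) - g \<tau> - h *\<^sub>R 0) \<le> e*h"
      using r[OF t] e unfolding rder_def by blast
    show "\<exists>d>0. \<forall>h. 0 < h \<longrightarrow> h < d \<longrightarrow> \<tau> + h \<le> b \<longrightarrow>
       norm (g (\<tau>+h) - g a) - norm (g \<tau> - g a) \<le> e*h"
    proof (intro exI[of _ d] conjI allI impI d)
      fix h assume h: "0 < h" "h < d" "\<tau> + h \<le> b"
      have "norm (g (\<tau>+h) - g a) \<le> norm (g (\<tau>+h) - g \<tau>) + norm (g \<tau> - g a)"
        using norm_triangle_ineq[of "g (\<tau>+h) - g \<tau>" "g \<tau> - g a"] by simp
      moreover have "norm (g (\<tau>+h) - g \<tau>) \<le> e*h" using dh h by simp
      ultimately show "norm (g (\<tau>+h) - g a) - norm (g \<tau> - g a) \<le> e*h" by simp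
    qed
  qed
  then show ?thesis by simp
qed

lemma rder_diff:
  assumes "rder g g' \<tau> b" "rder k k' \<tau> b"
  shows "rder (\<lambda>x. g x - k x) (g' - k') \<tau> b"
  unfolding rder_def
proof (intro allI impI)
  fix e :: real assume e: "e > 0"
  obtain d1 where d1: "d1 > 0" "\<forall>h. 0 < h \<longrightarrow> h < d1 \<longrightarrow> \<tau> + h \<le> b \<longrightarrow>
      norm (g (\<tau>+h) - g \<tau> - h *\<^sub>R g') \<le> (e/2)*h"
    using assms(1) e unfolding rder_def by (meson half_gt_zero)
  obtain d2 where d2: "d2 > 0" "\<forall>h. 0 < h \<longrightarrow> h < d2 \<longrightarrow> \<tau> + h \<le> b \<longrightarrow>
      norm (k (\<tau>+h) - k \<tau> - h *\<^sub>R k') \<le> (e/2)*h"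
    using assms(2) e unfolding rder_def by (meson half_gt_zero)
  show "\<exists>d>0. \<forall>h. 0 < h \<longrightarrow> h < d \<longrightarrow> \<tau> + h \<le> b \<longrightarrow>
      norm (g (\<tau>+h) - k (\<tau>+h) - (g \<tau> - k \<tau>) - h *\<^sub>R (g' - k')) \<le> e*h"
  proof (intro exI[of _ "min d1 d2"] conjI allI impI)
    show "min d1 d2 > 0" using d1 d2 by simp
    fix h assume h: "0 < h" "h < min d1 d2" "\<tau> + h \<le> b"
    have eq: "g (\<tau>+h) - k (\<tau>+h) - (g \<tau> - k \<tau>) - h *\<^sub>R (g' - k') =
      (g (\<tau>+h) - g \<tau> - h *\<^sub>R g') - (k (\<tau>+h) - k \<tau> - h *\<^sub>R k')"
      by (simp add: algebra_simps)
    have "norm (g (\<tau>+h) - k (\<tau>+h) - (g \<tau> - k \<tau>) - h *\<^sub>R (g' - k')) \<le>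
       norm (g (\<tau>+h) - g \<tau> - h *\<^sub>R g') + norm (k (\<tau>+h) - k \<tau> - h *\<^sub>R k')"
      unfolding eq by (rule norm_triangle_ineq4)
    also have "\<dots> \<le> (e/2)*h + (e/2)*h" using d1 d2 h by (intro add_mono) auto
    finally show "norm (g (\<tau>+h) - k (\<tau>+h) - (g \<tau> - k \<tau>) - h *\<^sub>R (g' - k')) \<le> e*h" by simp
  qed
qed

lemma rder_from_vd:
  assumes "(g has_vector_derivative g') (at \<tau> within {a..b})" "\<tau> \<in> {a..<b}"
  shows "rder g g' \<tau> b"
  unfolding rder_def
proof (intro allI impI)
  fix e :: real assume e: "e > 0"
  from assms(1) have "\<forall>e>0. \<exists>d>0. \<forall>y\<in>{a..b}. norm (y - \<tau>) < d \<longrightarrow>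
      norm (g y - g \<tau> - (y - \<tau>) *\<^sub>R g') \<le> e * norm (y - \<tau>)"
    unfolding has_vector_derivative_def has_derivative_within_alt by blast
  then obtain d where d: "d > 0" "\<forall>y\<in>{a..b}. norm (y - \<tau>) < d \<longrightarrow>
      norm (g y - g \<tau> - (y - \<tau>) *\<^sub>R g') \<le> e * norm (y - \<tau>)" using e by blast
  show "\<exists>d>0. \<forall>h. 0 < h \<longrightarrow> h < d \<longrightarrow> \<tau> + h \<le> b \<longrightarrow>
      norm (g (\<tau>+h) - g \<tau> - h *\<^sub>R g') \<le> e*h"
  proof (intro exI[of _ d] conjI allI impI d(1))
    fix h assume h: "0 < h" "h < d" "\<tau> + h \<le> b"
    have "\<tau> + h \<in> {a..b}" using h assms(2) by auto
    with d(2) h show "norm (g (\<tau>+h) - g \<tau> - h *\<^sub>R g') \<le> e*h" by force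
  qed
qed

lemma rder_from_lim:
  assumes "((\<lambda>h. (1/h) *\<^sub>R (g (\<tau>+h) - g \<tau>)) \<longlongrightarrow> g') (at_right 0)"
  shows "rder g g' \<tau> b"
  unfolding rder_def
proof (intro allI impI)
  fix e :: real assume e: "e > 0"
  have "eventually (\<lambda>h. dist ((1/h) *\<^sub>R (g (\<tau>+h) - g \<tau>)) g' < e) (at_right 0)"
    using assms e by (rule tendstoD)
  then obtain b' where b': "b' > 0" "\<forall>h>0. h < b' \<longrightarrow> dist ((1/h) *\<^sub>R (g (\<tau>+h) - g \<tau>)) g' < e"
    unfolding eventually_at_right_field by auto
  show "\<exists>d>0. \<forall>h. 0 < h \<longrightarrow> h < d \<longrightarrow> \<tau> + h \<le> b \<longrightarrow>
      norm (g (\<tau>+h) - g \<tau> - h *\<^sub>R g') \<le> e*h"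
  proof (intro exI[of _ b'] conjI allI impI b'(1))
    fix h :: real assume h: "0 < h" "h < b'" "\<tau> + h \<le> b"
    have "dist ((1/h) *\<^sub>R (g (\<tau>+h) - g \<tau>)) g' < e" using b' h by auto
    moreover have "g (\<tau>+h) - g \<tau> - h *\<^sub>R g' = h *\<^sub>R ((1/h) *\<^sub>R (g (\<tau>+h) - g \<tau>) - g')"
      using h by (simp add: algebra_simps)
    ultimately have "norm (g (\<tau>+h) - g \<tau> - h *\<^sub>R g') \<le> h * e"
      using h by (simp add: dist_norm)
    then show "norm (g (\<tau>+h) - g \<tau> - h *\<^sub>R g') \<le> e*h" by (simp add: mult.commute)
  qed
qed

lemma rder_to_lim:
  assumes "rder g g' \<tau> b" "\<tau> < b"
  shows "((\<lambda>h. (1/h) *\<^sub>R (g (\<tau>+h) - g \<tau>)) \<longlongrightarrow> g') (at_right 0)"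
proof (rule tendstoI)
  fix e :: real assume e: "e > 0"
  obtain d where d: "d > 0" "\<forall>h. 0 < h \<longrightarrow> h < d \<longrightarrow> \<tau> + h \<le> b \<longrightarrow>
      norm (g (\<tau>+h) - g \<tau> - h *\<^sub>R g') \<le> (e/2)*h"
    using assms(1) e unfolding rder_def by (meson half_gt_zero)
  show "eventually (\<lambda>h. dist ((1/h) *\<^sub>R (g (\<tau>+h) - g \<tau>)) g' < e) (at_right 0)"
    unfolding eventually_at_right_field
  proof (intro exI[of _ "min d (b - \<tau>)"] conjI allI impI)
    show "0 < min d (b - \<tau>)" using d assms(2) by simp
    fix h :: real assume h: "0 < h" "h < min d (b - \<tau>)"
    have n: "norm (g (\<tau>+h) - g \<tau> - h *\<^sub>R g') \<le> (e/2)*h" using d h by auto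
    have "(1/h) *\<^sub>R (g (\<tau>+h) - g \<tau>) - g' = (1/h) *\<^sub>R (g (\<tau>+h) - g \<tau> - h *\<^sub>R g')"
      using h by (simp add: algebra_simps)
    then have "dist ((1/h) *\<^sub>R (g (\<tau>+h) - g \<tau>)) g' = (1/h) * norm (g (\<tau>+h) - g \<tau> - h *\<^sub>R g')"
      using h by (simp add: dist_norm)
    also have "\<dots> \<le> (1/h) * ((e/2)*h)" using n h by (intro mult_left_mono) auto
    also have "\<dots> = e/2" using h by simp
    finally show "dist ((1/h) *\<^sub>R (g (\<tau>+h) - g \<tau>)) g' < e" using e by simp
  qed
qed

typedef 'a cp = "UNIV :: 'a set" by auto

lemmas cp_simps = Abs_cp_inverse[OF UNIV_I] Rep_cp_inverse Rep_cp_inject[symmetric]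

instantiation cp :: (real_normed_vector) real_normed_vector
begin
definition zero_cp_def: "0 = Abs_cp 0"
definition plus_cp_def: "x + y = Abs_cp (Rep_cp x + Rep_cp y)"
definition minus_cp_def: "x - y = Abs_cp (Rep_cp x - Rep_cp y)"
definition uminus_cp_def: "- x = Abs_cp (- Rep_cp x)"
definition scaleR_cp_def: "scaleR c x = Abs_cp (c *\<^sub>R Rep_cp x)"
definition norm_cp_def: "norm x = norm (Rep_cp x)"
definition sgn_cp_def: "sgn (x :: 'a cp) = Abs_cp (Rep_cp x /\<^sub>R norm (Rep_cp x))"
definition dist_cp_def: "dist (x :: 'a cp) y = dist (Rep_cp x) (Rep_cp y)"
definition uniformity_cp_def: "(uniformity :: ('a cp \<times> 'a cp) filter) = (INF e\<in>{0<..}. principal {(x, y). dist (Rep_cp x) (Rep_cp y) < e})"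
definition open_cp_def: "open (U :: 'a cp set) = (\<forall>x\<in>U. eventually (\<lambda>(x', y). x' = x \<longrightarrow> y \<in> U) (INF e\<in>{0<..}. principal {(x, y). dist (Rep_cp x) (Rep_cp y) < e}))"
instance
  apply intro_classes
  subgoal by (simp add: dist_cp_def norm_cp_def minus_cp_def cp_simps dist_norm)
  subgoal by (simp add: plus_cp_def cp_simps add.assoc)
  subgoal by (simp add: plus_cp_def cp_simps add.commute)
  subgoal by (simp add: plus_cp_def zero_cp_def cp_simps)
  subgoal by (simp add: plus_cp_def zero_cp_def uminus_cp_def cp_simps)
  subgoal by (simp add: plus_cp_def minus_cp_def uminus_cp_def cp_simps)
  subgoal by (simp add: plus_cp_def scaleR_cp_def cp_simps scaleR_add_right)
  subgoal by (simp add: plus_cp_def scaleR_cp_def cp_simps scaleR_add_left)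
  subgoal by (simp add: scaleR_cp_def cp_simps)
  subgoal by (simp add: scaleR_cp_def cp_simps)
  subgoal by (simp add: sgn_cp_def scaleR_cp_def norm_cp_def sgn_div_norm)
  subgoal by (simp add: uniformity_cp_def dist_cp_def)
  subgoal by (simp add: open_cp_def uniformity_cp_def)
  subgoal by (simp add: norm_cp_def zero_cp_def cp_simps)
  subgoal by (simp add: norm_cp_def plus_cp_def cp_simps norm_triangle_ineq)
  subgoal by (simp add: norm_cp_def scaleR_cp_def cp_simps)
  done
end

lemma Rep_cp_add: "Rep_cp (x + y) = Rep_cp x + Rep_cp y" by (simp add: plus_cp_def cp_simps)
lemma Rep_cp_scaleR: "Rep_cp (c *\<^sub>R x) = c *\<^sub>R Rep_cp x" by (simp add: scaleR_cp_def cp_simps)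
lemma Abs_cp_add: "Abs_cp (x + y) = Abs_cp x + Abs_cp y" by (simp add: plus_cp_def cp_simps)
lemma Abs_cp_scaleR: "Abs_cp (c *\<^sub>R x) = c *\<^sub>R Abs_cp x" by (simp add: scaleR_cp_def cp_simps)

lemma bl_Rep_cp: "bounded_linear (Rep_cp :: 'a::real_normed_vector cp \<Rightarrow> 'a)"
  by (rule bounded_linear_intro[of _ 1]) (auto simp: Rep_cp_add Rep_cp_scaleR norm_cp_def)
lemma bl_Abs_cp: "bounded_linear (Abs_cp :: 'a::real_normed_vector \<Rightarrow> 'a cp)"
  by (rule bounded_linear_intro[of _ 1]) (auto simp: Abs_cp_add Abs_cp_scaleR norm_cp_def cp_simps)

instance cp :: ("{real_normed_vector, complete_space}") banach
proof
  fix X :: "nat \<Rightarrow> 'a cp" assume c: "Cauchy X"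
  have "Cauchy (\<lambda>n. Rep_cp (X n))"
    using c unfolding Cauchy_def by (simp add: dist_norm norm_cp_def minus_cp_def cp_simps)
  then have "convergent (\<lambda>n. Rep_cp (X n))" by (simp add: Cauchy_convergent_iff)
  then obtain L where L: "(\<lambda>n. Rep_cp (X n)) \<longlonglongrightarrow> L" unfolding convergent_def by blast
  have "(\<lambda>n. Abs_cp (Rep_cp (X n))) \<longlonglongrightarrow> Abs_cp L"
    using bounded_linear.tendsto[OF bl_Abs_cp L] .
  then show "convergent X" by (auto simp: convergent_def cp_simps)
qed

lemma FTC_gen:
  fixes f :: "real \<Rightarrow> 'a::{real_normed_vector, complete_space}"
  assumes c: "continuous_on {a..b} f"
  shows "f integrable_on {a..b}"
    and "x \<in> {a..b} \<Longrightarrow> ((\<lambda>u. integral {a..u} f) has_vector_derivative f x) (at x within {a..b})"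
proof -
  define g where "g = (\<lambda>t. Abs_cp (f t))"
  have gc: "continuous_on {a..b} g" unfolding g_def
    by (rule continuous_on_compose2[OF linear_continuous_on[OF bl_Abs_cp] c]) auto
  have fg: "f = Rep_cp \<circ> g" by (auto simp: g_def cp_simps)
  have int: "(f has_integral Rep_cp (integral {a..u} g)) {a..u}" if "u \<in> {a..b}" for u
  proof -
    have "g integrable_on {a..u}"
      using that by (intro integrable_continuous_interval continuous_on_subset[OF gc]) auto
    then have "(g has_integral integral {a..u} g) {a..u}" by (simp add: has_integral_integral)
    from has_integral_linear[OF this bl_Rep_cp] show ?thesis by (simp add: fg)
  qed
  show "f integrable_on {a..b}"
  proof (cases "a \<le> b")
    case True then show ?thesis using int[of b] by auto
  next
    case False then show ?thesis by (simp add: integrable_on_empty)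
  qed
  assume x: "x \<in> {a..b}"
  have D: "((\<lambda>u. Rep_cp (integral {a..u} g)) has_vector_derivative Rep_cp (g x)) (at x within {a..b})"
    by (rule bounded_linear.has_vector_derivative[OF bl_Rep_cp integral_has_vector_derivative[OF gc x]])
  have E: "integral {a..u} f = Rep_cp (integral {a..u} g)" if "u \<in> {a..b}" for u
    using int[OF that] by (rule integral_unique)
  have "Rep_cp (g x) = f x" by (simp add: g_def cp_simps)
  with has_vector_derivative_transform[OF x E D]
  show "((\<lambda>u. integral {a..u} f) has_vector_derivative f x) (at x within {a..b})" by simp
qed

locale sgl =
  fixes D :: "'h::{real_inner, polish_space} set" and A :: "'h \<Rightarrow> 'h" and T :: "real \<Rightarrow> 'h \<Rightarrow> 'h"
  assumes lin: "lin_op D A"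
    and T0: "C0_semigroup_generated (closure D) (part_dom D A) A T"
begin

lemma subD: "subspace D" using lin by (simp add: lin_op_def)

lemma subX: "subspace (closure D)"
proof -
  have add: "x + y \<in> closure D" if "x \<in> closure D" "y \<in> closure D" for x y
  proof -
    have "(\<lambda>p. fst p + snd p) ` closure (D \<times> D) \<subseteq> closure D"
    proof (rule image_closure_subset)
      show "continuous_on (closure (D \<times> D)) (\<lambda>p. fst p + snd p)" by (intro continuous_intros)
      show "(\<lambda>p. fst p + snd p) ` (D \<times> D) \<subseteq> closure D"
        using subD closure_subset by (force simp: subspace_def)
    qed simp
    moreover have "(x, y) \<in> closure (D \<times> D)" using that by (simp add: closure_Times)
    ultimately show ?thesis by force
  qed
  have sc: "c *\<^sub>R x \<in> closure D" if "x \<in> closure D" for x c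
  proof -
    have "(\<lambda>x. c *\<^sub>R x) ` closure D \<subseteq> closure D"
    proof (rule image_closure_subset)
      show "continuous_on (closure D) (\<lambda>x. c *\<^sub>R x)" by (intro continuous_intros)
      show "(\<lambda>x. c *\<^sub>R x) ` D \<subseteq> closure D"
        using subD closure_subset by (force simp: subspace_def)
    qed simp
    then show ?thesis using that by auto
  qed
  have "0 \<in> closure D" using subD closure_subset by (auto simp: subspace_def)
  then show ?thesis using add sc by (simp add: subspace_def)
qed

lemma X_diff: "x \<in> closure D \<Longrightarrow> y \<in> closure D \<Longrightarrow> x - y \<in> closure D"
  using subX by (rule subspace_diff)
lemma X_add: "x \<in> closure D \<Longrightarrow> y \<in> closure D \<Longrightarrow> x + y \<in> closure D"
  using subX by (simp add: subspace_add)
lemma X_scale: "x \<in> closure D \<Longrightarrow> c *\<^sub>R x \<in> closure D"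
  using subX by (simp add: subspace_scale)
lemma X_0: "0 \<in> closure D"
  using subX by (simp add: subspace_0)
lemma D_X: "x \<in> D \<Longrightarrow> x \<in> closure D" using closure_subset by blast

lemma T_in: "t \<ge> 0 \<Longrightarrow> x \<in> closure D \<Longrightarrow> T t x \<in> closure D"
  using T0 unfolding C0_semigroup_generated_def by blast
lemma T_add: "t \<ge> 0 \<Longrightarrow> x \<in> closure D \<Longrightarrow> y \<in> closure D \<Longrightarrow> T t (x + y) = T t x + T t y"
  using T0 unfolding C0_semigroup_generated_def by blast
lemma T_scale: "t \<ge> 0 \<Longrightarrow> x \<in> closure D \<Longrightarrow> T t (c *\<^sub>R x) = c *\<^sub>R T t x"
  using T0 unfolding C0_semigroup_generated_def by blast
lemma T_bound: "t \<ge> 0 \<Longrightarrow> \<exists>C>0. \<forall>x\<in>closure D. norm (T t x) \<le> C * norm x"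
proof -
  assume t: "t \<ge> 0"
  then obtain C where C: "\<forall>x\<in>closure D. norm (T t x) \<le> C * norm x"
    using T0 unfolding C0_semigroup_generated_def by blast
  show ?thesis
  proof (intro exI[of _ "max C 1"] conjI ballI)
    fix x assume "x \<in> closure D"
    then have "norm (T t x) \<le> C * norm x" using C by blast
    also have "\<dots> \<le> max C 1 * norm x" by (intro mult_right_mono) auto
    finally show "norm (T t x) \<le> max C 1 * norm x" .
  qed simp
qed
lemma T_zero: "t \<ge> 0 \<Longrightarrow> T t 0 = 0"
  using T_scale[of t 0 0] X_0 by simp
lemma T_minus: "t \<ge> 0 \<Longrightarrow> x \<in> closure D \<Longrightarrow> T t (- x) = - T t x"
  using T_scale[of t x "-1"] by simp
lemma T_diff: "t \<ge> 0 \<Longrightarrow> x \<in> closure D \<Longrightarrow> y \<in> closure D \<Longrightarrow> T t (x - y) = T t x - T t y"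
  using T_add[of t x "- y"] T_minus[of t y] subX
  by (simp add: subspace_neg)
lemma T_id: "x \<in> closure D \<Longrightarrow> T 0 x = x"
  using T0 unfolding C0_semigroup_generated_def by blast
lemma T_semi: "t \<ge> 0 \<Longrightarrow> s \<ge> 0 \<Longrightarrow> x \<in> closure D \<Longrightarrow> T (t + s) x = T t (T s x)"
  using T0 unfolding C0_semigroup_generated_def by blast
lemma T_contt: "x \<in> closure D \<Longrightarrow> continuous_on {0..} (\<lambda>t. T t x)"
  using T0 unfolding C0_semigroup_generated_def by blast
lemma T_dom: "x \<in> part_dom D A \<longleftrightarrow> x \<in> closure D \<and> (\<exists>l. ((\<lambda>h. (1 / h) *\<^sub>R (T h x - x)) \<longlongrightarrow> l) (at_right 0))"
  using T0 unfolding C0_semigroup_generated_def by blast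
lemma T_gen: "x \<in> part_dom D A \<Longrightarrow> ((\<lambda>h. (1 / h) *\<^sub>R (T h x - x)) \<longlongrightarrow> A x) (at_right 0)"
  using T0 unfolding C0_semigroup_generated_def by blast

lemma T_cont: assumes t: "t \<ge> 0" shows "continuous_on (closure D) (T t)"
proof -
  obtain C where C: "C > 0" "\<forall>x\<in>closure D. norm (T t x) \<le> C * norm x" using T_bound[OF t] by blast
  show ?thesis unfolding continuous_on_iff
  proof (intro ballI allI impI)
    fix x e assume x: "x \<in> closure D" and e: "(0::real) < e"
    show "\<exists>d>0. \<forall>x'\<in>closure D. dist x' x < d \<longrightarrow> dist (T t x') (T t x) < e"
    proof (intro exI[of _ "e / C"] conjI ballI impI)
      show "e / C > 0" using e C by simp
      fix x' assume x': "x' \<in> closure D" and d: "dist x' x < e / C"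
      have "dist (T t x') (T t x) = norm (T t (x' - x))"
        using T_diff[OF t x' x] by (simp add: dist_norm)
      also have "\<dots> \<le> C * norm (x' - x)" using C X_diff[OF x' x] by blast
      also have "\<dots> < C * (e / C)" using d C by (intro mult_strict_left_mono) (auto simp: dist_norm)
      also have "\<dots> = e" using C by simp
      finally show "dist (T t x') (T t x) < e" .
    qed
  qed
qed

lemma part_dom_sub: "x \<in> part_dom D A \<Longrightarrow> x \<in> closure D \<and> A x \<in> closure D"
  by (auto simp: part_dom_def D_X)

end

lemma infdist_shift:
  fixes x y :: "'a::real_normed_vector"
  assumes S: "subspace S" and y: "y \<in> S"
  shows "infdist (x + y) S \<le> infdist x S"
proof -
  have ne: "S \<noteq> {}" using S subspace_0 by blast
  have "infdist (x + y) S \<le> (INF a\<in>S. dist x a)"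
  proof (rule cINF_greatest[OF ne])
    fix a assume a: "a \<in> S"
    have "a + y \<in> S" using S a y by (simp add: subspace_add)
    then have "infdist (x + y) S \<le> dist (x + y) (a + y)" by (rule infdist_le)
    also have "\<dots> = dist x a" by (rule dist_add_cancel2)
    finally show "infdist (x + y) S \<le> dist x a" .
  qed
  then show ?thesis using ne by (simp add: infdist_def)
qed

context sgl begin

definition P :: "'h \<Rightarrow> real \<Rightarrow> 'h" where
  "P u \<tau> = integral {0..\<tau>} (\<lambda>r. T r u)"

lemma Tu_cont: "u \<in> closure D \<Longrightarrow> continuous_on {0..b} (\<lambda>r. T r u)"
  using T_contt by (rule continuous_on_subset) auto

lemma P_vd: assumes u: "u \<in> closure D" and tb: "\<tau> \<in> {0..b}"
  shows "(P u has_vector_derivative T \<tau> u) (at \<tau> within {0..b})"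
  unfolding P_def by (rule FTC_gen(2)[OF Tu_cont[OF u] tb])

lemma P_cont: assumes u: "u \<in> closure D" shows "continuous_on {0..b} (P u)"
  unfolding continuous_on_eq_continuous_within
  using P_vd[OF u] has_vector_derivative_continuous by blast

lemma P_0: "P u 0 = 0" by (simp add: P_def)

lemma P_rder: "u \<in> closure D \<Longrightarrow> \<tau> \<in> {0..<b} \<Longrightarrow> rder (P u) (T \<tau> u) \<tau> b"
  by (rule rder_from_vd[OF P_vd]) auto

lemma P_in: assumes u: "u \<in> closure D" and t: "\<tau> \<ge> 0" shows "P u \<tau> \<in> closure D"
proof -
  have "infdist (P u \<tau>) (closure D) \<le> infdist (P u 0) (closure D)"
  proof (rule rd_mono[OF t])
    show "continuous_on {0..\<tau>} (\<lambda>x. infdist (P u x) (closure D))"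
      by (intro continuous_on_infdist P_cont u)
    fix \<sigma> e :: real assume s: "\<sigma> \<in> {0..<\<tau>}" and e: "e > 0"
    obtain d where d: "d > 0" "\<forall>h. 0 < h \<longrightarrow> h < d \<longrightarrow> \<sigma> + h \<le> \<tau> \<longrightarrow>
      norm (P u (\<sigma>+h) - P u \<sigma> - h *\<^sub>R T \<sigma> u) \<le> e*h"
      using P_rder[OF u s] e unfolding rder_def by blast
    show "\<exists>d>0. \<forall>h. 0 < h \<longrightarrow> h < d \<longrightarrow> \<sigma> + h \<le> \<tau> \<longrightarrow>
       infdist (P u (\<sigma>+h)) (closure D) - infdist (P u \<sigma>) (closure D) \<le> e*h"
    proof (intro exI[of _ d] conjI allI impI d(1))
      fix h assume h: "0 < h" "h < d" "\<sigma> + h \<le> \<tau>"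
      have i1: "infdist (P u (\<sigma>+h)) (closure D) \<le> infdist (P u \<sigma> + h *\<^sub>R T \<sigma> u) (closure D)
          + dist (P u (\<sigma>+h)) (P u \<sigma> + h *\<^sub>R T \<sigma> u)" by (rule infdist_triangle)
      have i2: "infdist (P u \<sigma> + h *\<^sub>R T \<sigma> u) (closure D) \<le> infdist (P u \<sigma>) (closure D)"
        using s by (intro infdist_shift subX X_scale T_in u) auto
      have i3: "dist (P u (\<sigma>+h)) (P u \<sigma> + h *\<^sub>R T \<sigma> u) = norm (P u (\<sigma>+h) - P u \<sigma> - h *\<^sub>R T \<sigma> u)"
        by (simp add: dist_norm algebra_simps)
      have i4: "norm (P u (\<sigma>+h) - P u \<sigma> - h *\<^sub>R T \<sigma> u) \<le> e*h" using d h by blast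
      from i1 i2 i3 i4 show "infdist (P u (\<sigma>+h)) (closure D) - infdist (P u \<sigma>) (closure D) \<le> e*h"
        by linarith
    qed
  qed
  moreover have "infdist (P u 0) (closure D) = 0" using X_0 by (simp add: P_0)
  ultimately have "infdist (P u \<tau>) (closure D) = 0" using infdist_nonneg[of "P u \<tau>" "closure D"] by linarith
  moreover have "closure D \<noteq> {}" using X_0 by auto
  ultimately show ?thesis using in_closure_iff_infdist_zero[of "closure D" "P u \<tau>"] by simp
qed

lemma rder_T:
  assumes t: "t \<ge> 0" and gX: "\<And>x. x \<in> {\<sigma>..b} \<Longrightarrow> g x \<in> closure D" and g': "g' \<in> closure D"
    and r: "rder g g' \<sigma> b"
  shows "rder (\<lambda>x. T t (g x)) (T t g') \<sigma> b"
  unfolding rder_def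
proof (intro allI impI)
  fix e :: real assume e: "e > 0"
  obtain C where C: "C > 0" "\<forall>x\<in>closure D. norm (T t x) \<le> C * norm x" using T_bound[OF t] by blast
  have eC: "e / C > 0" using e C by simp
  obtain d where d: "d > 0" "\<forall>h. 0 < h \<longrightarrow> h < d \<longrightarrow> \<sigma> + h \<le> b \<longrightarrow>
      norm (g (\<sigma>+h) - g \<sigma> - h *\<^sub>R g') \<le> (e/C)*h"
    using r eC unfolding rder_def by blast
  show "\<exists>d>0. \<forall>h. 0 < h \<longrightarrow> h < d \<longrightarrow> \<sigma> + h \<le> b \<longrightarrow>
      norm (T t (g (\<sigma>+h)) - T t (g \<sigma>) - h *\<^sub>R T t g') \<le> e*h"
  proof (intro exI[of _ d] conjI allI impI d(1))
    fix h assume h: "0 < h" "h < d" "\<sigma> + h \<le> b"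
    have g1: "g (\<sigma>+h) \<in> closure D" and g0: "g \<sigma> \<in> closure D" using gX h by auto
    have in1: "g (\<sigma>+h) - g \<sigma> \<in> closure D" by (intro X_diff g1 g0)
    have in2: "h *\<^sub>R g' \<in> closure D" by (intro X_scale g')
    have "T t (g (\<sigma>+h) - g \<sigma> - h *\<^sub>R g') = T t (g (\<sigma>+h) - g \<sigma>) - T t (h *\<^sub>R g')"
      by (rule T_diff[OF t in1 in2])
    also have "\<dots> = T t (g (\<sigma>+h)) - T t (g \<sigma>) - h *\<^sub>R T t g'"
      by (simp only: T_diff[OF t g1 g0] T_scale[OF t g'])
    finally have "T t (g (\<sigma>+h)) - T t (g \<sigma>) - h *\<^sub>R T t g' = T t (g (\<sigma>+h) - g \<sigma> - h *\<^sub>R g')" by simp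
    then have "norm (T t (g (\<sigma>+h)) - T t (g \<sigma>) - h *\<^sub>R T t g') \<le> C * norm (g (\<sigma>+h) - g \<sigma> - h *\<^sub>R g')"
      using C(2) X_diff[OF in1 in2] by auto
    also have "\<dots> \<le> C * ((e/C)*h)" using d h C by (intro mult_left_mono) auto
    also have "\<dots> = e*h" using C by simp
    finally show "norm (T t (g (\<sigma>+h)) - T t (g \<sigma>) - h *\<^sub>R T t g') \<le> e*h" .
  qed
qed

lemma P_comm:
  assumes u: "u \<in> closure D" and h: "h \<ge> 0" and t: "\<tau> \<ge> 0"
  shows "T h (P u \<tau>) = P u (\<tau> + h) - P u h"
proof -
  define g where "g = (\<lambda>\<sigma>. T h (P u \<sigma>) - (P u (\<sigma> + h) - P u h))"
  have "g \<tau> = g 0"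
  proof (rule rder_zero_const[OF t])
    have c1: "continuous_on {0..\<tau>} (\<lambda>\<sigma>. T h (P u \<sigma>))"
      by (rule continuous_on_compose2[OF T_cont[OF h] P_cont[OF u]]) (auto intro: P_in u)
    have c2: "continuous_on {0..\<tau>} (\<lambda>\<sigma>. P u (\<sigma> + h))"
      by (rule continuous_on_compose2[OF P_cont[OF u, of "\<tau> + h"]]) (auto intro!: continuous_intros simp: h)
    show "continuous_on {0..\<tau>} g" unfolding g_def
      by (intro continuous_intros c1 c2)
    fix \<sigma> assume s: "\<sigma> \<in> {0..<\<tau>}"
    have r1: "rder (\<lambda>\<sigma>. T h (P u \<sigma>)) (T h (T \<sigma> u)) \<sigma> \<tau>"
      using s by (intro rder_T h P_rder u T_in P_in) auto
    have r2: "rder (\<lambda>\<sigma>. P u (\<sigma> + h) - P u h) (T (\<sigma> + h) u) \<sigma> \<tau>"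
    proof -
      have "rder (P u) (T (\<sigma> + h) u) (\<sigma> + h) (\<tau> + h)" using s h by (intro P_rder u) auto
      then show ?thesis unfolding rder_def by (simp add: algebra_simps)
    qed
    have "T h (T \<sigma> u) = T (\<sigma> + h) u" using T_semi[OF h _ u, of \<sigma>] s by (simp add: add.commute)
    then show "rder g 0 \<sigma> \<tau>" unfolding g_def using rder_diff[OF r1 r2] by simp
  qed
  then show ?thesis by (simp add: g_def P_0 T_zero h)
qed

lemma Gen:
  assumes u: "u \<in> closure D" and t: "\<tau> \<ge> 0"
  shows "P u \<tau> \<in> part_dom D A" "A (P u \<tau>) = T \<tau> u - u"
proof -
  have l1: "((\<lambda>h. (1/h) *\<^sub>R (P u (\<tau>+h) - P u \<tau>)) \<longlongrightarrow> T \<tau> u) (at_right 0)"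
    by (rule rder_to_lim[of _ _ _ "\<tau> + 1"]) (use t in \<open>auto intro: P_rder u\<close>)
  have l2: "((\<lambda>h. (1/h) *\<^sub>R (P u (0+h) - P u 0)) \<longlongrightarrow> T 0 u) (at_right 0)"
    by (rule rder_to_lim[of _ _ _ "1"]) (auto intro: P_rder u)
  have "((\<lambda>h. (1/h) *\<^sub>R (P u (\<tau>+h) - P u \<tau>) - (1/h) *\<^sub>R (P u (0+h) - P u 0)) \<longlongrightarrow> T \<tau> u - T 0 u) (at_right 0)"
    by (intro tendsto_diff l1 l2)
  moreover have "eventually (\<lambda>h. (1/h) *\<^sub>R (P u (\<tau>+h) - P u \<tau>) - (1/h) *\<^sub>R (P u (0+h) - P u 0)
      = (1/h) *\<^sub>R (T h (P u \<tau>) - P u \<tau>)) (at_right 0)"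
    unfolding eventually_at_right_field
  proof (intro exI[of _ 1] conjI allI impI)
    fix h :: real assume "0 < h" "h < 1"
    then have e: "T h (P u \<tau>) = P u (\<tau> + h) - P u h" using P_comm[OF u _ t, of h] by simp
    show "(1/h) *\<^sub>R (P u (\<tau>+h) - P u \<tau>) - (1/h) *\<^sub>R (P u (0+h) - P u 0)
      = (1/h) *\<^sub>R (T h (P u \<tau>) - P u \<tau>)"
      by (simp only: e P_0 add_0_left diff_zero) (simp add: algebra_simps)
  qed simp
  ultimately have lim: "((\<lambda>h. (1/h) *\<^sub>R (T h (P u \<tau>) - P u \<tau>)) \<longlongrightarrow> T \<tau> u - u) (at_right 0)"
    using T_id[OF u] by (simp add: tendsto_cong)
  show dom: "P u \<tau> \<in> part_dom D A" using T_dom P_in[OF u t] lim by blast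
  show "A (P u \<tau>) = T \<tau> u - u"
    using tendsto_unique[OF _ T_gen[OF dom] lim] by simp
qed

lemma K:
  assumes y: "y \<in> part_dom D A" and t: "\<tau> \<ge> 0"
  shows "T \<tau> y - y = P (A y) \<tau>"
proof -
  have yX: "y \<in> closure D" and AyX: "A y \<in> closure D" using part_dom_sub[OF y] by auto
  define g where "g = (\<lambda>\<sigma>. T \<sigma> y - y - P (A y) \<sigma>)"
  have "g \<tau> = g 0"
  proof (rule rder_zero_const[OF t])
    show "continuous_on {0..\<tau>} g" unfolding g_def
      by (intro continuous_intros Tu_cont yX P_cont AyX)
    fix \<sigma> assume s: "\<sigma> \<in> {0..<\<tau>}"
    have r1: "rder (\<lambda>\<sigma>. T \<sigma> y - y) (T \<sigma> (A y)) \<sigma> \<tau>"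
    proof (rule rder_from_lim)
      have "((\<lambda>h. T \<sigma> ((1 / h) *\<^sub>R (T h y - y))) \<longlongrightarrow> T \<sigma> (A y)) (at_right 0)"
      proof (rule continuous_on_tendsto_compose[OF T_cont T_gen[OF y] AyX])
        show "\<sigma> \<ge> 0" using s by simp
        show "\<forall>\<^sub>F h in at_right 0. (1 / h) *\<^sub>R (T h y - y) \<in> closure D"
          unfolding eventually_at_right_field
          by (intro exI[of _ 1] conjI allI impI X_scale X_diff T_in yX) auto
      qed
      moreover have "eventually (\<lambda>h. T \<sigma> ((1 / h) *\<^sub>R (T h y - y)) =
          (1/h) *\<^sub>R (T (\<sigma>+h) y - y - (T \<sigma> y - y))) (at_right 0)"
        unfolding eventually_at_right_field
      proof (intro exI[of _ 1] conjI allI impI)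
        fix h :: real assume h: "0 < h" "h < 1"
        have "T (\<sigma>+h) y = T \<sigma> (T h y)" using T_semi[OF _ _ yX, of \<sigma> h] s h by simp
        moreover have "T \<sigma> ((1 / h) *\<^sub>R (T h y - y)) = (1/h) *\<^sub>R (T \<sigma> (T h y) - T \<sigma> y)"
          using s h T_scale[of \<sigma> "T h y - y" "1/h"] T_diff[of \<sigma> "T h y" y] T_in[of h y] yX X_diff
          by simp
        ultimately show "T \<sigma> ((1 / h) *\<^sub>R (T h y - y)) =
          (1/h) *\<^sub>R (T (\<sigma>+h) y - y - (T \<sigma> y - y))" by simp
      qed simp
      ultimately show "((\<lambda>h. (1/h) *\<^sub>R (T (\<sigma>+h) y - y - (T \<sigma> y - y))) \<longlongrightarrow> T \<sigma> (A y)) (at_right 0)"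
        by (simp add: tendsto_cong)
    qed
    have r2: "rder (P (A y)) (T \<sigma> (A y)) \<sigma> \<tau>" using s by (intro P_rder AyX)
    show "rder g 0 \<sigma> \<tau>" unfolding g_def using rder_diff[OF r1 r2] by simp
  qed
  then show ?thesis by (simp add: g_def P_0 T_id yX)
qed

end

context sgl begin

lemma Sder:
  assumes res: "in_real_resolvent UNIV D A nu" and x: "x \<in> closure D" and t: "t \<ge> 0"
  shows "integrated_sg_deriv D A T nu t x = T t x"
proof -
  define y where "y = resolv D A nu x"
  have "\<exists>!y. y \<in> D \<and> nu *\<^sub>R y - A y = x" using res by (simp add: in_real_resolvent_def)
  then have "y \<in> D \<and> nu *\<^sub>R y - A y = x"
    unfolding y_def resolv_def by (rule theI')
  then have yD: "y \<in> D" and yeq: "nu *\<^sub>R y - A y = x" by auto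
  have Ay: "A y = nu *\<^sub>R y - x" using yeq by (simp add: algebra_simps)
  have yX: "y \<in> closure D" using yD by (rule D_X)
  have AyX: "A y \<in> closure D" unfolding Ay by (intro X_diff X_scale yX x)
  have yd: "y \<in> part_dom D A" using yD AyX by (simp add: part_dom_def)
  have eq: "integrated_sg D A T nu \<tau> x = P x \<tau>" if tau: "\<tau> \<in> {0..t+1}" for \<tau>
  proof -
    have tau0: "\<tau> \<ge> 0" using tau by simp
    have "integrated_sg D A T nu \<tau> x = nu *\<^sub>R P y \<tau> - A (P y \<tau>)"
      by (simp add: integrated_sg_def P_def y_def Let_def)
    also have "A (P y \<tau>) = P (A y) \<tau>"
      using Gen(2)[OF yX tau0] K[OF yd tau0] by simp
    finally have e1: "integrated_sg D A T nu \<tau> x = nu *\<^sub>R P y \<tau> - P (A y) \<tau>" .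
    have i1: "((\<lambda>r. T r y) has_integral P y \<tau>) {0..\<tau>}"
      unfolding P_def using FTC_gen(1)[OF Tu_cont[OF yX]] by (simp add: has_integral_integral)
    have i2: "((\<lambda>r. T r (A y)) has_integral P (A y) \<tau>) {0..\<tau>}"
      unfolding P_def using FTC_gen(1)[OF Tu_cont[OF AyX]] by (simp add: has_integral_integral)
    have "((\<lambda>r. nu *\<^sub>R T r y - T r (A y)) has_integral (nu *\<^sub>R P y \<tau> - P (A y) \<tau>)) {0..\<tau>}"
      by (intro has_integral_diff has_integral_cmul i1 i2)
    moreover have cg: "T r x = nu *\<^sub>R T r y - T r (A y)" if "r \<in> {0..\<tau>}" for r
    proof -
      have r: "r \<ge> 0" using that by simp
      have "T r x = T r (nu *\<^sub>R y - A y)" using yeq by simp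
      also have "\<dots> = T r (nu *\<^sub>R y) - T r (A y)" by (rule T_diff[OF r X_scale[OF yX] AyX])
      also have "\<dots> = nu *\<^sub>R T r y - T r (A y)" by (simp add: T_scale[OF r yX])
      finally show ?thesis .
    qed
    ultimately have "((\<lambda>r. T r x) has_integral (nu *\<^sub>R P y \<tau> - P (A y) \<tau>)) {0..\<tau>}"
      by (subst has_integral_cong[OF cg]) auto
    then have "P x \<tau> = nu *\<^sub>R P y \<tau> - P (A y) \<tau>" unfolding P_def by (rule integral_unique)
    with e1 show ?thesis by simp
  qed
  have tin: "t \<in> {0..t+1}" using t by simp
  have vd: "((\<lambda>\<tau>. integrated_sg D A T nu \<tau> x) has_vector_derivative T t x) (at t within {0..t+1})"
    by (rule has_vector_derivative_transform[OF tin eq P_vd[OF x tin]])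
  have F: "at t within {0..} = at t within {0..t+1}"
    by (rule at_within_nhd[of _ "{..<t+1}"]) (use t in auto)
  show ?thesis unfolding integrated_sg_deriv_def F
  proof (rule vector_derivative_within[OF _ vd])
    have "t islimpt {0..t+1}" using islimpt_Icc[of 0 "t+1" t] t by simp
    then show "at t within {0..t+1} \<noteq> bot" by (simp add: trivial_limit_within)
  qed
qed

lemma T_meas:
  assumes \<tau>m: "\<tau> \<in> borel_measurable N" and \<tau>pos: "\<And>p. p \<in> space N \<Longrightarrow> \<tau> p \<ge> 0"
    and um: "u \<in> N \<rightarrow>\<^sub>M restrict_space borel (closure D)"
  shows "(\<lambda>p. T (\<tau> p) (u p)) \<in> borel_measurable N"
proof (rule borel_measurable_LIMSEQ_metric[where f="\<lambda>n p. T (max 0 (real_of_int \<lceil>real (Suc n) * \<tau> p\<rceil> / real (Suc n))) (u p)"])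
  fix n :: nat
  have "(\<lambda>p. (\<lambda>i::int. T (max 0 (real_of_int i / real (Suc n))) (u p)) \<lceil>real (Suc n) * \<tau> p\<rceil>) \<in> borel_measurable N"
  proof (rule measurable_compose_countable[where f="\<lambda>i p. T (max 0 (real_of_int i / real (Suc n))) (u p)" and g="\<lambda>p. \<lceil>real (Suc n) * \<tau> p\<rceil>"])
    fix i :: int
    show "(\<lambda>p. T (max 0 (real_of_int i / real (Suc n))) (u p)) \<in> borel_measurable N"
      by (rule measurable_compose[OF um borel_measurable_continuous_on_restrict[OF T_cont]]) simp
    show "(\<lambda>p. \<lceil>real (Suc n) * \<tau> p\<rceil>) \<in> N \<rightarrow>\<^sub>M count_space UNIV"
      by (rule measurable_compose[OF _ measurable_real_ceiling]) (intro borel_measurable_times borel_measurable_const \<tau>m)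
  qed
  then show "(\<lambda>p. T (max 0 (real_of_int \<lceil>real (Suc n) * \<tau> p\<rceil> / real (Suc n))) (u p)) \<in> borel_measurable N"
    by simp
next
  fix p assume p: "p \<in> space N"
  have up: "u p \<in> closure D" using um p by (auto dest: measurable_space simp: space_restrict_space)
  have t0: "\<tau> p \<ge> 0" using \<tau>pos p by simp
  define s where "s = (\<lambda>(n::nat). max 0 (real_of_int \<lceil>real (Suc n) * \<tau> p\<rceil> / real (Suc n)))"
  have lo: "\<tau> p \<le> s n" for n
  proof -
    have "real (Suc n) * \<tau> p \<le> real_of_int \<lceil>real (Suc n) * \<tau> p\<rceil>" by (rule le_of_int_ceiling)
    then have "\<tau> p \<le> real_of_int \<lceil>real (Suc n) * \<tau> p\<rceil> / real (Suc n)"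
      by (simp add: field_simps)
    then show ?thesis by (simp add: s_def)
  qed
  have hi: "s n \<le> \<tau> p + inverse (real (Suc n))" for n
  proof -
    have "real_of_int \<lceil>real (Suc n) * \<tau> p\<rceil> \<le> real (Suc n) * \<tau> p + 1" by linarith
    then have "real_of_int \<lceil>real (Suc n) * \<tau> p\<rceil> / real (Suc n) \<le> (real (Suc n) * \<tau> p + 1) / real (Suc n)"
      by (rule divide_right_mono) simp
    also have "\<dots> = \<tau> p + inverse (real (Suc n))"
      by (simp add: field_simps del: of_nat_Suc)
    finally have "real_of_int \<lceil>real (Suc n) * \<tau> p\<rceil> / real (Suc n) \<le> \<tau> p + inverse (real (Suc n))" .
    moreover have "0 \<le> \<tau> p + inverse (real (Suc n))" using t0 by simp
    ultimately show ?thesis by (simp add: s_def)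
  qed
  have "s \<longlonglongrightarrow> \<tau> p"
  proof (rule tendsto_sandwich[of "\<lambda>n. \<tau> p" _ _ "\<lambda>n. \<tau> p + inverse (real (Suc n))"])
    show "\<forall>\<^sub>F n in sequentially. \<tau> p \<le> s n" using lo by simp
    show "\<forall>\<^sub>F n in sequentially. s n \<le> \<tau> p + inverse (real (Suc n))" using hi by simp
    show "(\<lambda>n. \<tau> p) \<longlonglongrightarrow> \<tau> p" by simp
    show "(\<lambda>n. \<tau> p + inverse (real (Suc n))) \<longlonglongrightarrow> \<tau> p"
      using tendsto_add[OF tendsto_const LIMSEQ_inverse_real_of_nat, of "\<tau> p"] by simp
  qed
  have "(\<lambda>n. T (s n) (u p)) \<longlonglongrightarrow> T (\<tau> p) (u p)"
    by (rule continuous_on_tendsto_compose[OF T_contt[OF up] \<open>s \<longlonglongrightarrow> \<tau> p\<close>]) (use t0 in \<open>auto simp: s_def\<close>)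
  then show "(\<lambda>n. T (max 0 (real_of_int \<lceil>real (Suc n) * \<tau> p\<rceil> / real (Suc n))) (u p)) \<longlonglongrightarrow> T (\<tau> p) (u p)"
    by (simp add: s_def)
qed

end

theorem proposition3p4:
  fixes D :: "'h::{real_inner, polish_space} set"
    and A :: "'h \<Rightarrow> 'h"
    and omegaA nu :: real
    and T0 :: "real \<Rightarrow> 'h \<Rightarrow> 'h"
    and M :: "'w measure"
    and \<theta> :: "real \<Rightarrow> 'w \<Rightarrow> 'w"
    and Y :: "'w \<Rightarrow> real \<Rightarrow> 'h"
  assumes lin: "lin_op D A"
    and H0_proper: "closure D \<noteq> UNIV"
    and A: "assumption_A D A omegaA"
    and T0: "C0_semigroup_generated (closure D) (part_dom D A) A T0"
    and nu: "nu > omegaA"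
    and neg: "omegaA < 0"
    and mds: "ergodic_mds M \<theta>"
    and Y_H0: "\<forall>w\<in>space M. \<forall>t. Y w t \<in> closure D"
    and Y_meas: "\<forall>t. (\<lambda>w. Y w t) \<in> borel_measurable M"
    and Y_stat: "\<forall>t s. AE w in M. Y (\<theta> t w) s = Y w (t + s)"
  shows "rds M \<theta> (closure D)
           (\<lambda>t w \<xi>. T0 t \<xi> - integrated_sg_deriv D A T0 nu t (Y w 0) + Y (\<theta> t w) 0) \<and>
         (\<forall>w\<in>space M. \<forall>t\<ge>0. \<forall>s\<ge>0. \<forall>\<xi>\<in>closure D.
            (\<lambda>t w \<xi>. T0 t \<xi> - integrated_sg_deriv D A T0 nu t (Y w 0) + Y (\<theta> t w) 0) (t + s) w \<xi> =
            (\<lambda>t w \<xi>. T0 t \<xi> - integrated_sg_deriv D A T0 nu t (Y w 0) + Y (\<theta> t w) 0) s (\<theta> t w)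
              ((\<lambda>t w \<xi>. T0 t \<xi> - integrated_sg_deriv D A T0 nu t (Y w 0) + Y (\<theta> t w) 0) t w \<xi>))"
proof -
  interpret sgl D A T0 using lin T0 by unfold_locales
  have res: "in_real_resolvent UNIV D A nu" using A nu unfolding assumption_A_def by blast
  have \<theta>m: "\<And>t. \<theta> t \<in> M \<rightarrow>\<^sub>M M" and \<theta>j: "(\<lambda>(t, w). \<theta> t w) \<in> borel \<Otimes>\<^sub>M M \<rightarrow>\<^sub>M M"
    and \<theta>0: "\<forall>w\<in>space M. \<theta> 0 w = w" and \<theta>add: "\<forall>t s. \<forall>w\<in>space M. \<theta> (t + s) w = \<theta> t (\<theta> s w)"
    using mds unfolding ergodic_mds_def by auto
  have \<theta>sp: "\<And>t w. w \<in> space M \<Longrightarrow> \<theta> t w \<in> space M" using measurable_space[OF \<theta>m] by blast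
  have YX: "\<And>w. w \<in> space M \<Longrightarrow> Y w 0 \<in> closure D" using Y_H0 by blast
  define \<phi> where "\<phi> = (\<lambda>t w \<xi>. T0 t \<xi> - integrated_sg_deriv D A T0 nu t (Y w 0) + Y (\<theta> t w) 0)"
  have Seq: "\<And>t w. t \<ge> 0 \<Longrightarrow> w \<in> space M \<Longrightarrow> integrated_sg_deriv D A T0 nu t (Y w 0) = T0 t (Y w 0)"
    using Sder[OF res] YX by blast
  have \<phi>eq: "\<And>t w \<xi>. t \<ge> 0 \<Longrightarrow> w \<in> space M \<Longrightarrow> \<phi> t w \<xi> = T0 t \<xi> - T0 t (Y w 0) + Y (\<theta> t w) 0"
    by (simp add: \<phi>_def Seq)
  have coc: "\<forall>w\<in>space M. \<forall>t\<ge>0. \<forall>s\<ge>0. \<forall>\<xi>\<in>closure D. \<phi> (t + s) w \<xi> = \<phi> s (\<theta> t w) (\<phi> t w \<xi>)"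
  proof (intro ballI allI impI)
    fix w t s \<xi> assume w: "w \<in> space M" and t: "(0::real) \<le> t" and s: "(0::real) \<le> s" and \<xi>: "\<xi> \<in> closure D"
    define a where "a = Y w 0"
    define b where "b = Y (\<theta> t w) 0"
    have aX: "a \<in> closure D" using YX[OF w] by (simp add: a_def)
    have tw: "\<theta> t w \<in> space M" using \<theta>sp[OF w] .
    have bX: "b \<in> closure D" using YX[OF tw] by (simp add: b_def)
    have \<theta>ts: "\<theta> (t + s) w = \<theta> s (\<theta> t w)" using \<theta>add w by (metis add.commute)
    have tsum: "t + s \<ge> 0" using t s by simp
    have l: "\<phi> (t + s) w \<xi> = T0 (t + s) \<xi> - T0 (t + s) a + Y (\<theta> s (\<theta> t w)) 0"
      using \<phi>eq[OF tsum w] \<theta>ts by (simp add: a_def)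
    have m: "\<phi> t w \<xi> = T0 t \<xi> - T0 t a + b" using \<phi>eq[OF t w] by (simp add: a_def b_def)
    have x1: "T0 t \<xi> \<in> closure D" using T_in[OF t \<xi>] .
    have x2: "T0 t a \<in> closure D" using T_in[OF t aX] .
    have x12: "T0 t \<xi> - T0 t a \<in> closure D" using X_diff[OF x1 x2] .
    have "T0 s (T0 t \<xi> - T0 t a + b) = T0 s (T0 t \<xi>) - T0 s (T0 t a) + T0 s b"
      using T_add[OF s x12 bX] T_diff[OF s x1 x2] by simp
    also have "T0 s (T0 t \<xi>) = T0 (t + s) \<xi>" using T_semi[OF s t \<xi>] by (simp add: add.commute)
    also have "T0 s (T0 t a) = T0 (t + s) a" using T_semi[OF s t aX] by (simp add: add.commute)
    finally have r: "T0 s (T0 t \<xi> - T0 t a + b) = T0 (t + s) \<xi> - T0 (t + s) a + T0 s b" .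
    have "\<phi> s (\<theta> t w) (\<phi> t w \<xi>) = T0 s (T0 t \<xi> - T0 t a + b) - T0 s b + Y (\<theta> s (\<theta> t w)) 0"
      using \<phi>eq[OF s tw] m by (simp add: b_def)
    then show "\<phi> (t + s) w \<xi> = \<phi> s (\<theta> t w) (\<phi> t w \<xi>)" using l r by simp
  qed
  define N where "N = restrict_space borel {0::real..} \<Otimes>\<^sub>M (M \<Otimes>\<^sub>M restrict_space borel (closure D))"
  have spN: "space N = {0..} \<times> (space M \<times> closure D)"
    by (simp add: N_def space_pair_measure space_restrict_space)
  have idm: "(\<lambda>x. x) \<in> restrict_space borel {0::real..} \<rightarrow>\<^sub>M borel"
    by (rule measurable_restrict_space1) simp
  have fstN: "fst \<in> borel_measurable N"
    unfolding N_def by (rule measurable_compose[OF measurable_fst idm])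
  have wN: "(\<lambda>p. fst (snd p)) \<in> N \<rightarrow>\<^sub>M M"
    unfolding N_def by (rule measurable_compose[OF measurable_snd measurable_fst])
  have xN: "(\<lambda>p. snd (snd p)) \<in> N \<rightarrow>\<^sub>M restrict_space borel (closure D)"
    unfolding N_def by (rule measurable_compose[OF measurable_snd measurable_snd])
  have Y0m: "(\<lambda>w. Y w 0) \<in> M \<rightarrow>\<^sub>M restrict_space borel (closure D)"
    by (rule measurable_restrict_space2) (use YX Y_meas in auto)
  have pos: "\<And>p. p \<in> space N \<Longrightarrow> fst p \<ge> 0" using spN by auto
  have m1: "(\<lambda>p. T0 (fst p) (snd (snd p))) \<in> borel_measurable N"
    by (rule T_meas[OF fstN pos xN])
  have m2: "(\<lambda>p. T0 (fst p) (Y (fst (snd p)) 0)) \<in> borel_measurable N"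
    by (rule T_meas[OF fstN pos measurable_compose[OF wN Y0m]])
  have pairm: "(\<lambda>p. (fst p, fst (snd p))) \<in> N \<rightarrow>\<^sub>M borel \<Otimes>\<^sub>M M"
    by (rule measurable_Pair[OF fstN wN])
  have m3: "(\<lambda>p. Y (\<theta> (fst p) (fst (snd p))) 0) \<in> borel_measurable N"
  proof -
    have "(\<lambda>p. (\<lambda>(t, w). \<theta> t w) (fst p, fst (snd p))) \<in> N \<rightarrow>\<^sub>M M"
      by (rule measurable_compose[OF pairm \<theta>j])
    then have "(\<lambda>p. \<theta> (fst p) (fst (snd p))) \<in> N \<rightarrow>\<^sub>M M" by simp
    from measurable_compose[OF this] Y_meas show ?thesis by blast
  qed
  have mm: "(\<lambda>p. T0 (fst p) (snd (snd p)) - T0 (fst p) (Y (fst (snd p)) 0) + Y (\<theta> (fst p) (fst (snd p))) 0)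
      \<in> borel_measurable N"
    by (intro borel_measurable_add borel_measurable_diff m1 m2 m3)
  have meas: "(\<lambda>(t, w, x). \<phi> t w x) \<in> N \<rightarrow>\<^sub>M restrict_space borel (closure D)"
  proof (rule measurable_restrict_space2)
    have "(\<lambda>(t, w, x). \<phi> t w x) \<in> borel_measurable N \<longleftrightarrow>
      (\<lambda>p. T0 (fst p) (snd (snd p)) - T0 (fst p) (Y (fst (snd p)) 0) + Y (\<theta> (fst p) (fst (snd p))) 0)
        \<in> borel_measurable N"
      by (rule measurable_cong) (auto simp: spN \<phi>eq)
    then show "(\<lambda>(t, w, x). \<phi> t w x) \<in> borel_measurable N" using mm by simp
    show "(\<lambda>(t, w, x). \<phi> t w x) \<in> space N \<rightarrow> closure D"
    proof
      fix p assume p: "p \<in> space N"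
      then obtain t w x where pe: "p = (t, w, x)" and t: "t \<ge> 0" and w: "w \<in> space M" and x: "x \<in> closure D"
        using spN by auto
      have "\<phi> t w x \<in> closure D" unfolding \<phi>eq[OF t w]
        by (intro X_add X_diff T_in t x YX w \<theta>sp)
      then show "(\<lambda>(t, w, x). \<phi> t w x) p \<in> closure D" by (simp add: pe)
    qed
  qed
  have R1: "rds M \<theta> (closure D) \<phi>"
    unfolding rds_def
  proof (intro conjI bexI[of _ "space M"])
    show "(\<lambda>(t, w, x). \<phi> t w x) \<in> restrict_space borel {0..} \<Otimes>\<^sub>M (M \<Otimes>\<^sub>M restrict_space borel (closure D))
        \<rightarrow>\<^sub>M restrict_space borel (closure D)" using meas by (simp add: N_def)
    show "emeasure M (space M) = emeasure M (space M)" ..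
    show "space M \<in> sets M" by simp
    show "\<forall>w\<in>space M. (\<forall>x\<in>closure D. \<phi> 0 w x = x) \<and>
        (\<forall>t\<ge>0. \<forall>s\<ge>0. \<forall>x\<in>closure D. \<phi> (t + s) w x = \<phi> s (\<theta> t w) (\<phi> t w x))"
    proof (intro ballI conjI)
      fix w x assume w: "w \<in> space M" and x: "x \<in> closure D"
      show "\<phi> 0 w x = x" using \<phi>eq[of 0 w x] w \<theta>0 T_id[OF x] T_id[OF YX[OF w]] by simp
    next
      fix w assume "w \<in> space M"
      then show "\<forall>t\<ge>0. \<forall>s\<ge>0. \<forall>x\<in>closure D. \<phi> (t + s) w x = \<phi> s (\<theta> t w) (\<phi> t w x)"
        using coc by blast
    qed
  qed
  show ?thesis using R1 coc unfolding \<phi>_def by simp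
qed

end
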